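(* Let $n\ge 1$ be an integer, and suppose that $A,B,C\subseteq\mathbb{Z}_5^n$ satisfy $(A+B)\cap C=\emptyset$, where $A+B=\{a+b:a\in A,b\in B\}$. If $\min\{|A|,|B|\}>2\cdot5^{n-1}$ and $C\ne\emptyset$, then $|A|+|B|+2|C|\le 6\cdot5^{n-1}$.
   Context: $\mathbb{Z}_5^n$ denotes the elementary abelian $5$-group of rank $n$. *)

theory Defs
  imports "HOL-Analysis.Analysis" "HOL-Library.Numeral_Type"
begin

text \<open>The elementary abelian group Z_5^n is rendered as the vector type 5 ^ 'n,
  where 5 is the ring of integers mod 5 (Numeral_Type) and the index type 'n is
  a finite type with CARD('n) = n (so n >= 1 automatically).\<close>

definition sumset :: "'a::plus set \<Rightarrow> 'a set \<Rightarrow> 'a set" where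
  "sumset A B = {a + b | a b. a \<in> A \<and> b \<in> B}"

end

theory Submission
  imports Defs "HOL-Computational_Algebra.Primes"
begin

lemma sumset_mono: "X \<subseteq> Y \<Longrightarrow> sumset X B \<subseteq> sumset Y B"
  unfolding sumset_def by blast

lemma sumset_Un: "sumset (X \<union> Y) B = sumset X B \<union> sumset Y B"
  unfolding sumset_def by blast

lemma sumset_Int: "sumset (X \<inter> Y) B \<subseteq> sumset X B \<inter> sumset Y B"
  unfolding sumset_def by blast

lemma sumset_comm: "sumset A B = sumset B (A::'a::ab_semigroup_add set)"
proof -
  have "sumset X Y \<subseteq> sumset Y X" for X Y :: "'a set"
  proof
    fix z assume "z \<in> sumset X Y"
    then obtain x y where "x \<in> X" "y \<in> Y" "z = x + y" unfolding sumset_def by blast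
    then have "z = y + x" by (simp add: add.commute)
    then show "z \<in> sumset Y X" unfolding sumset_def using \<open>x \<in> X\<close> \<open>y \<in> Y\<close> by blast
  qed
  then show ?thesis by blast
qed

lemma sumset_empty: "sumset {} B = {}"
  unfolding sumset_def by blast

lemma sumset_translate:
  fixes X B :: "'a::ab_group_add set"
  shows "sumset ((\<lambda>x. x + g) ` X) B = (\<lambda>x. x + g) ` sumset X B"
proof safe
  fix y assume "y \<in> sumset ((\<lambda>x. x + g) ` X) B"
  then obtain x b where "x \<in> X" "b \<in> B" "y = (x + g) + b" unfolding sumset_def by blast
  moreover have "x + b \<in> sumset X B" unfolding sumset_def using \<open>x \<in> X\<close> \<open>b \<in> B\<close> by blast
  ultimately show "y \<in> (\<lambda>x. x + g) ` sumset X B"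
    by (intro image_eqI[of _ _ "x + b"]) (auto simp: algebra_simps)
next
  fix z assume "z \<in> sumset X B"
  then obtain x b where "x \<in> X" "b \<in> B" "z = x + b" unfolding sumset_def by blast
  then have "z + g = (x + g) + b" "x + g \<in> (\<lambda>x. x + g) ` X" by (auto simp: algebra_simps)
  then show "z + g \<in> sumset ((\<lambda>x. x + g) ` X) B" unfolding sumset_def using \<open>b \<in> B\<close> by blast
qed

lemma card_le_sumset:
  fixes X B :: "'a::{ab_group_add,finite} set"
  assumes "B \<noteq> {}"
  shows "card X \<le> card (sumset X B)"
proof -
  obtain b where b: "b \<in> B" using assms by blast
  have "(\<lambda>x. x + b) ` X \<subseteq> sumset X B" using b unfolding sumset_def by blast
  moreover have "card ((\<lambda>x. x + b) ` X) = card X" by (simp add: card_image)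
  ultimately show ?thesis by (metis card_mono finite)
qed


lemma translate_not_UNIV:
  fixes S :: "'a::ab_group_add set"
  assumes "S \<noteq> UNIV" shows "(\<lambda>x. x + g) ` S \<noteq> UNIV"
proof
  assume u: "(\<lambda>x. x + g) ` S = UNIV"
  have "y \<in> S" for y
  proof -
    have "y + g \<in> (\<lambda>x. x + g) ` S" using u by simp
    then obtain s where "s \<in> S" "y + g = s + g" by blast
    then show ?thesis by simp
  qed
  then show False using assms by blast
qed

lemma hamidoune:
  fixes A B :: "'a::{ab_group_add,finite} set"
  assumes A: "A \<noteq> {}" and B: "B \<noteq> {}" and AB: "sumset A B \<noteq> UNIV"
  shows "\<exists>H. 0 \<in> H \<and> (\<forall>x\<in>H. \<forall>y\<in>H. x - y \<in> H) \<and> sumset H B \<noteq> UNIV \<and>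
           card (sumset H B) + card A \<le> card (sumset A B) + card H"
proof -
  define valid where "valid X \<longleftrightarrow> X \<noteq> {} \<and> sumset X B \<noteq> UNIV" for X :: "'a set"
  define \<kappa> where "\<kappa> = (LEAST k. \<exists>X. valid X \<and> card (sumset X B) = card X + k)"
  have ex: "\<exists>k. card (sumset X B) = card X + k" for X
    using card_le_sumset[OF B, of X] le_iff_add by blast
  have klow: "card X + \<kappa> \<le> card (sumset X B)" if "valid X" for X
  proof -
    obtain k where k: "card (sumset X B) = card X + k" using ex by blast
    then have "\<kappa> \<le> k" unfolding \<kappa>_def using that by (intro Least_le) blast
    then show ?thesis using k by simp
  qed
  have katt: "\<exists>X. valid X \<and> card (sumset X B) = card X + \<kappa>"
    unfolding \<kappa>_def by (rule LeastI_ex) (use A AB ex in \<open>auto simp: valid_def\<close>)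
  define frag where "frag X \<longleftrightarrow> valid X \<and> card (sumset X B) = card X + \<kappa>" for X
  define \<alpha> where "\<alpha> = (LEAST k. \<exists>X. frag X \<and> card X = k)"
  have alow: "\<alpha> \<le> card X" if "frag X" for X
    unfolding \<alpha>_def using that by (intro Least_le) blast
  have "\<exists>X. frag X \<and> card X = \<alpha>"
    unfolding \<alpha>_def by (rule LeastI_ex) (use katt frag_def in blast)
  then obtain H0 where H0: "frag H0" "card H0 = \<alpha>" by blast
  have trans: "frag ((\<lambda>x. x + g) ` X) \<and> card ((\<lambda>x. x + g) ` X) = card X" if "frag X" for X g
  proof -
    have c1: "card ((\<lambda>x. x + g) ` X) = card X" by (simp add: card_image)
    have c2: "card (sumset ((\<lambda>x. x + g) ` X) B) = card (sumset X B)"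
      by (simp add: sumset_translate card_image)
    show ?thesis using that c1 c2 translate_not_UNIV[of "sumset X B" g]
      unfolding frag_def valid_def by (auto simp: sumset_translate)
  qed
  obtain h0 where "h0 \<in> H0" using H0 unfolding frag_def valid_def by blast
  define H where "H = (\<lambda>x. x + (- h0)) ` H0"
  have "frag H \<and> card H = \<alpha>" unfolding H_def using trans[OF H0(1), of "- h0"] H0(2) by simp
  then have fragH: "frag H" and cardH: "card H = \<alpha>" by auto
  have H0in: "0 \<in> H" unfolding H_def using \<open>h0 \<in> H0\<close> by (intro image_eqI[of _ _ h0]) auto
  define N where "N = card (UNIV :: 'a set)"
  have HB: "card (sumset H B) = \<alpha> + \<kappa>" using fragH cardH frag_def by simp
  have HBN: "card (sumset H B) \<le> N" unfolding N_def by (rule card_mono) auto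
  define Y where "Y = uminus ` (UNIV - sumset H B)"
  have cY: "card Y = N - (\<alpha> + \<kappa>)"
    unfolding Y_def N_def using HB by (simp add: card_image card_Diff_subset)
  have YB: "sumset Y B \<subseteq> uminus ` (UNIV - H)"
  proof
    fix z assume "z \<in> sumset Y B"
    then obtain w b where w: "w \<notin> sumset H B" "b \<in> B" "z = - w + b"
      unfolding sumset_def Y_def by blast
    have "w - b \<notin> H"
    proof
      assume "w - b \<in> H"
      then have "(w - b) + b \<in> sumset H B" unfolding sumset_def using w(2) by blast
      then show False using w(1) by simp
    qed
    then show "z \<in> uminus ` (UNIV - H)" using w(3) by (intro image_eqI[of _ _ "w - b"]) auto
  qed
  have cYB: "card (sumset Y B) \<le> N - \<alpha>"
  proof -
    have "card (uminus ` (UNIV - H)) = N - \<alpha>"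
      unfolding N_def using cardH by (simp add: card_image card_Diff_subset)
    then show ?thesis using YB by (metis card_mono finite)
  qed
  have validY: "valid Y"
  proof -
    have "Y \<noteq> {}" using fragH unfolding Y_def frag_def valid_def by auto
    moreover have "0 \<notin> sumset Y B" using YB H0in by auto
    ultimately show ?thesis unfolding valid_def by auto
  qed
  have "card Y + \<kappa> \<le> card (sumset Y B)" using klow[OF validY] .
  then have "frag Y" using validY cY cYB HB HBN unfolding frag_def by linarith
  then have "\<alpha> \<le> card Y" by (rule alow)
  then have key0: "2 * \<alpha> + \<kappa> \<le> N" using cY HB HBN by linarith
  have key: "(\<lambda>x. x + (- h)) ` H = H" if hH: "h \<in> H" for h
  proof -
    define F where "F = (\<lambda>x. x + (- h)) ` H"
    have "frag F \<and> card F = \<alpha>" unfolding F_def using trans[OF fragH, of "- h"] cardH by simp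
    then have fragF: "frag F" and cardF: "card F = \<alpha>" by auto
    have F0: "0 \<in> F" unfolding F_def using hH by (intro image_eqI[of _ _ h]) auto
    have FB: "card (sumset F B) = \<alpha> + \<kappa>" using fragF cardF frag_def by simp
    have UI: "card (H \<union> F) + card (H \<inter> F) = \<alpha> + \<alpha>"
      using card_Un_Int[of H F] cardH cardF by simp
    have UIB: "card (sumset H B \<union> sumset F B) + card (sumset H B \<inter> sumset F B) = 2 * (\<alpha> + \<kappa>)"
      using card_Un_Int[of "sumset H B" "sumset F B"] HB FB by simp
    have vI: "valid (H \<inter> F)"
      using H0in F0 fragH sumset_mono[of "H \<inter> F" H B] unfolding valid_def frag_def by blast
    have I1: "card (H \<inter> F) + \<kappa> \<le> card (sumset (H \<inter> F) B)" using klow[OF vI] .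
    have I2: "card (sumset (H \<inter> F) B) \<le> card (sumset H B \<inter> sumset F B)"
      by (rule card_mono) (use sumset_Int[of H F B] in auto)
    show ?thesis
    proof (cases "sumset (H \<union> F) B = UNIV")
      case True
      then have "card (sumset H B \<union> sumset F B) = N" unfolding N_def by (simp add: sumset_Un)
      moreover have "card (H \<inter> F) \<ge> 1" using H0in F0
        by (metis IntI One_nat_def Suc_leI card_gt_0_iff empty_iff finite)
      ultimately have False using UIB I1 I2 key0 by (simp only: mult_2)
      then show ?thesis ..
    next
      case False
      have vU: "valid (H \<union> F)" using False H0in unfolding valid_def by auto
      have U1: "card (H \<union> F) + \<kappa> \<le> card (sumset H B \<union> sumset F B)"
        using klow[OF vU] by (simp add: sumset_Un)
      have "card (sumset (H \<inter> F) B) = card (H \<inter> F) + \<kappa>" using U1 UI UIB I1 I2 unfolding mult_2 by linarith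
      then have "frag (H \<inter> F)" using vI frag_def by blast
      then have ca: "\<alpha> \<le> card (H \<inter> F)" by (rule alow)
      have "H \<inter> F = H" by (rule card_subset_eq) (use ca cardH card_mono[of H "H \<inter> F"] in auto)
      moreover have "H \<inter> F = F" by (rule card_subset_eq) (use ca cardF card_mono[of F "H \<inter> F"] in auto)
      ultimately show ?thesis unfolding F_def by simp
    qed
  qed
  have sub: "\<forall>x\<in>H. \<forall>y\<in>H. x - y \<in> H"
  proof (intro ballI)
    fix x y assume "x \<in> H" "y \<in> H"
    then have "x + (- y) \<in> (\<lambda>x. x + (- y)) ` H" by blast
    then show "x - y \<in> H" using key[OF \<open>y \<in> H\<close>] by simp
  qed
  have vA: "valid A" using A AB valid_def by blast
  show ?thesis
    using H0in sub fragH klow[OF vA] HB cardH unfolding frag_def valid_def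
    by (intro exI[of _ H]) auto
qed


lemma periodic_dvd:
  fixes H X :: "'a::{ab_group_add,finite} set"
  assumes H0: "0 \<in> H" and Hsub: "\<forall>x\<in>H. \<forall>y\<in>H. x - y \<in> H" and per: "\<forall>x\<in>X. \<forall>h\<in>H. x + h \<in> X"
  shows "card H dvd card X"
  using per
proof (induction "card X" arbitrary: X rule: less_induct)
  case (less X)
  show ?case
  proof (cases "X = {}")
    case True then show ?thesis by simp
  next
    case False
    then obtain x where x: "x \<in> X" by blast
    define C where "C = (\<lambda>h. x + h) ` H"
    have CX: "C \<subseteq> X" using less.prems x C_def by auto
    have cC: "card C = card H" unfolding C_def by (simp add: card_image)
    define X' where "X' = X - C"
    have per': "\<forall>y\<in>X'. \<forall>h\<in>H. y + h \<in> X'"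
    proof (intro ballI)
      fix y h assume y: "y \<in> X'" and h: "h \<in> H"
      have "y + h \<in> X" using y h less.prems X'_def by auto
      moreover have "y + h \<notin> C"
      proof
        assume "y + h \<in> C"
        then obtain h' where h': "h' \<in> H" "y + h = x + h'" unfolding C_def by blast
        then have "y = x + (h' - h)" by (simp add: algebra_simps)
        moreover have "h' - h \<in> H" using Hsub h h' by blast
        ultimately have "y \<in> C" unfolding C_def by blast
        then show False using y X'_def by blast
      qed
      ultimately show "y + h \<in> X'" unfolding X'_def by blast
    qed
    have cX: "card X = card X' + card H"
      unfolding X'_def using CX cC card_Diff_subset[of C X] card_mono[OF _ CX] by simp
    have "card H > 0" using H0 by (auto simp: card_gt_0_iff)
    then have "card X' < card X" using cX by simp
    then have "card H dvd card X'" using less.hyps per' by blast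
    then show ?thesis using cX by simp
  qed
qed

lemma sub_add:
  fixes H :: "'a::ab_group_add set"
  assumes H0: "0 \<in> H" and Hsub: "\<forall>x\<in>H. \<forall>y\<in>H. x - y \<in> H" and "x \<in> H" "y \<in> H"
  shows "x + y \<in> H"
proof -
  have "0 - y \<in> H" using assms by blast
  then have "x - (0 - y) \<in> H" using assms by blast
  then show ?thesis by simp
qed

lemma bound:
  fixes A B :: "(5 ^ 'n) set"
  assumes A: "A \<noteq> {}" and B: "B \<noteq> {}" and AB: "sumset A B \<noteq> UNIV"
    and Bbig: "card B > 2 * 5 ^ (CARD('n) - 1)"
  shows "card A + 2 * 5 ^ (CARD('n) - 1) \<le> card (sumset A B)"
proof -
  define n where "n = CARD('n)"
  define m :: nat where "m = 5 ^ (n - 1)"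
  have n1: "n \<ge> 1" unfolding n_def by (simp add: Suc_leI)
  have Nm: "card (UNIV :: (5 ^ 'n) set) = 5 ^ n" unfolding n_def by simp
  obtain H where H0: "0 \<in> H" and Hsub: "\<forall>x\<in>H. \<forall>y\<in>H. x - y \<in> H"
    and HB: "sumset H B \<noteq> UNIV" and ineq: "card (sumset H B) + card A \<le> card (sumset A B) + card H"
    using hamidoune[OF A B AB] by blast
  have "card H dvd card (UNIV :: (5 ^ 'n) set)"
    by (rule periodic_dvd[OF H0 Hsub]) auto
  then have "card H dvd 5 ^ n" using Nm by simp
  then obtain i where i: "i \<le> n" "card H = 5 ^ i"
    using divides_primepow_nat[of 5 "card H" n] by auto
  have "i \<noteq> n"
  proof
    assume "i = n"
    then have "card H = card (UNIV :: (5 ^ 'n) set)" using i Nm by simp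
    then have "H = UNIV" by (metis card_subset_eq finite subset_UNIV)
    moreover obtain b where "b \<in> B" using B by blast
    ultimately have "y \<in> sumset H B" for y unfolding sumset_def
      by (intro CollectI exI[of _ "y - b"] exI[of _ b]) auto
    then have "sumset H B = UNIV" by blast
    then show False using HB by simp
  qed
  then have "i \<le> n - 1" using i by simp
  then obtain t where t: "m = card H * t" unfolding m_def using i
    by (metis le_imp_power_dvd dvdE)
  have "card H dvd card (sumset H B)"
  proof (rule periodic_dvd[OF H0 Hsub], intro ballI)
    fix z h assume z: "z \<in> sumset H B" and h: "h \<in> H"
    then obtain x b where xb: "x \<in> H" "b \<in> B" "z = x + b" unfolding sumset_def by blast
    have "x + h \<in> H" using sub_add[OF H0 Hsub xb(1) h] .
    moreover have "z + h = (x + h) + b" using xb by (simp add: algebra_simps)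
    ultimately show "z + h \<in> sumset H B" unfolding sumset_def using xb by blast
  qed
  then obtain q where q: "card (sumset H B) = card H * q" by (elim dvdE)
  have "card B \<le> card (sumset H B)"
    using card_le_sumset[of H B] H0 sumset_comm[of H B] by auto
  then have "2 * (card H * t) < card H * q" using Bbig q t unfolding m_def n_def by linarith
  then have "card H * (2 * t) < card H * q" by (simp add: mult.left_commute)
  then have "2 * t < q" using mult_less_cancel1 by blast
  then have "2 * t + 1 \<le> q" by simp
  then have "card H * (2 * t + 1) \<le> card H * q" by (rule mult_le_mono2)
  then have "2 * m + card H \<le> card (sumset H B)" using q t by (simp add: algebra_simps)
  then show ?thesis using ineq unfolding m_def n_def by linarith
qed

theorem lemma2:
  fixes A B C :: "(5 ^ 'n) set"
  assumes "sumset A B \<inter> C = {}"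
    and "min (card A) (card B) > 2 * 5 ^ (CARD('n) - 1)"
    and "C \<noteq> {}"
  shows "card A + card B + 2 * card C \<le> 6 * 5 ^ (CARD('n) - 1)"
proof -
  define m :: nat where "m = 5 ^ (CARD('n) - 1)"
  have N: "card (UNIV :: (5 ^ 'n) set) = 5 * m"
  proof -
    have "CARD('n) = Suc (CARD('n) - 1)" by (simp add: Suc_leI)
    then have "(5::nat) ^ CARD('n) = 5 * m" unfolding m_def by (metis power_Suc)
    then show ?thesis by simp
  qed
  have A: "A \<noteq> {}" and B: "B \<noteq> {}" using assms(2) by auto
  have S: "sumset A B \<noteq> UNIV" using assms(1,3) by blast
  have S2: "sumset B A \<noteq> UNIV" using S sumset_comm[of A B] by simp
  have b1: "card A + 2 * m \<le> card (sumset A B)"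
    using bound[OF A B S] assms(2) unfolding m_def by simp
  have b2: "card B + 2 * m \<le> card (sumset A B)"
    using bound[OF B A S2] assms(2) sumset_comm[of A B] unfolding m_def by simp
  have "C \<subseteq> UNIV - sumset A B" using assms(1) by blast
  then have "card C \<le> 5 * m - card (sumset A B)"
    using card_mono[of "UNIV - sumset A B" C] card_Diff_subset[of "sumset A B" UNIV] N by simp
  moreover have "card (sumset A B) \<le> 5 * m" using N card_mono[of UNIV "sumset A B"] by simp
  ultimately show ?thesis using b1 b2 unfolding m_def[symmetric] by linarith
qed

end
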